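(* Let $n \geq 2$, $N = \frac{n(n+1)}{2}$, fix $1 \leq i < j \leq k < n$, and put $x = \lambda_{k,i}$, $y = \lambda_{k,j}$. Let $\mathcal{A}$, $V_{\mathcal{A}}$ and its $U(\mathfrak{gl}(n,\mathbb{C}))$-module structure be as in the context. Let $\mathcal{B} \subset \mathcal{A}$ be the subalgebra of functions in $\mathcal{A}$ that are also regular at every $1$-critical point (see context). Let $\tau$ be the involution of $\mathbb{Z}^N$ swapping the coordinates $(k,i)$ and $(k,j)$, and for $z \in \mathbb{Z}^N_0$ define $$S(z) = \frac{T(z) + T(\tau(z))}{2}, \qquad A(z) = \frac{T(z) - T(\tau(z))}{2(x-y)} \qquad \text{in } V_{\mathcal{A}}.$$ Let $V_{\mathcal{B}} \subset V_{\mathcal{A}}$ be the $\mathcal{B}$-submodule generated by $\{S(z), A(z) \mid z \in \mathbb{Z}^N_0\}$. Then $V_{\mathcal{B}}$ is a $U(\mathfrak{gl}(n,\mathbb{C}))$-submodule of $V_{\mathcal{A}}$.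
   Context: Points $v \in \mathbb{C}^N$ are arrays $(v_{r,s})_{1 \leq s \leq r \leq n}$ and $\lambda_{r,s}$ is the coordinate function $v \mapsto v_{r,s}$. A point $v$ is generic if for all $1 \leq a < b \leq r < n$ one has $v_{r,a} - v_{r,b} \notin \mathbb{Z}$. A point $v$ is called $1$-critical (for the fixed pair) if $v_{k,i} = v_{k,j}$ and for every other pair $(r,a) \neq (r,b)$ of positions in the same row $r < n$ with $\{(r,a),(r,b)\} \neq \{(k,i),(k,j)\}$ one has $v_{r,a} - v_{r,b} \notin \mathbb{Z}$. $\mathcal{A}$ is the ring of rational functions $g/h$ ($g,h$ polynomials in the $\lambda_{r,s}$) with $h(v) \neq 0$ at every generic $v$; $\mathcal{B}$ consists of those $f \in \mathcal{A}$ which can be written with a denominator nonvanishing also at every $1$-critical point (e.g. $1/(x-y) \in \mathcal{A} \setminus \mathcal{B}$). $\mathbb{Z}^N_0$ is the set of $z \in \mathbb{Z}^N$ with $z_{n,s} = 0$ for all $s$; $\delta^{r,s} \in \mathbb{Z}^N$ is the unit vector at position $(r,s)$. For a rational function $f$ and $z \in \mathbb{Z}^N$, $f(\lambda^z)$ denotes $v \mapsto f(v+z)$. Put $p^{\pm}_{r,s} = \prod_{t=1}^{r \pm 1} (\lambda_{r,s} - \lambda_{r \pm 1, t})$, $q_{r,s} = \prod_{t \neq s,\, 1 \leq t \leq r} (\lambda_{r,s} - \lambda_{r,t})$, $|\lambda|_r = \lambda_{r,1} + \cdots + \lambda_{r,r}$, $|\lambda|_0 = 0$. $V_{\mathcal{A}}$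 is the free $\mathcal{A}$-module with basis $\{T(z) \mid z \in \mathbb{Z}^N_0\}$, equipped with the $U(\mathfrak{gl}(n,\mathbb{C}))$-module structure by $\mathcal{A}$-linear operators given on basis vectors by $E_{r,r+1} T(z) = -\sum_{s=1}^r \frac{p^+_{r,s}(\lambda^z)}{q_{r,s}(\lambda^z)} T(z + \delta^{r,s})$, $E_{r+1,r} T(z) = \sum_{s=1}^r \frac{p^-_{r,s}(\lambda^z)}{q_{r,s}(\lambda^z)} T(z - \delta^{r,s})$ for $1 \leq r < n$, and $E_{r,r} T(z) = (|\lambda^z|_r - |\lambda^z|_{r-1} + r - 1) T(z)$ for $1 \leq r \leq n$ (these formulas do define a $U(\mathfrak{gl}(n,\mathbb{C}))$-module). The element $A(z)$ is a vector of $V_{\mathcal{A}}$, not to be confused with the algebra $\mathcal{A}$. *)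

theory Defs
  imports Complex_Main
begin

type_synonym pt = "nat \<times> nat \<Rightarrow> complex"
type_synonym zvec = "nat \<times> nat \<Rightarrow> int"
type_synonym vec = "zvec \<Rightarrow> pt \<Rightarrow> complex"  (* coefficient of T(z), as a function of v *)

definition pos :: "nat \<Rightarrow> (nat \<times> nat) set" where
  "pos n = {(r, s). 1 \<le> s \<and> s \<le> r \<and> r \<le> n}"

definition generic :: "nat \<Rightarrow> pt \<Rightarrow> bool" where
  "generic n v \<longleftrightarrow> (\<forall>r a b. 1 \<le> a \<and> a < b \<and> b \<le> r \<and> r < n \<longrightarrow> v (r, a) - v (r, b) \<notin> \<int>)"

definition critical1 :: "nat \<Rightarrow> nat \<Rightarrow> nat \<Rightarrow> nat \<Rightarrow> pt \<Rightarrow> bool" where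
  "critical1 n k i j v \<longleftrightarrow> v (k, i) = v (k, j) \<and>
     (\<forall>r a b. 1 \<le> a \<and> a < b \<and> b \<le> r \<and> r < n \<and> (r, a, b) \<noteq> (k, i, j)
        \<longrightarrow> v (r, a) - v (r, b) \<notin> \<int>)"

inductive_set polyfun :: "nat \<Rightarrow> (pt \<Rightarrow> complex) set" for n where
  pconst: "(\<lambda>v. c) \<in> polyfun n"
| pcoord: "p \<in> pos n \<Longrightarrow> (\<lambda>v. v p) \<in> polyfun n"
| padd: "f \<in> polyfun n \<Longrightarrow> g \<in> polyfun n \<Longrightarrow> (\<lambda>v. f v + g v) \<in> polyfun n"
| pmult: "f \<in> polyfun n \<Longrightarrow> g \<in> polyfun n \<Longrightarrow> (\<lambda>v. f v * g v) \<in> polyfun n"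

text \<open>The algebra A: a rational function g/h with h nonvanishing at generic points is
  represented canonically by its values at generic points (a Zariski dense set),
  and by 0 at non-generic points.\<close>
definition ringA :: "nat \<Rightarrow> (pt \<Rightarrow> complex) set" where
  "ringA n = {f. (\<forall>v. \<not> generic n v \<longrightarrow> f v = 0) \<and>
     (\<exists>g\<in>polyfun n. \<exists>h\<in>polyfun n. \<forall>v. generic n v \<longrightarrow> h v \<noteq> 0 \<and> f v = g v / h v)}"

definition ringB :: "nat \<Rightarrow> nat \<Rightarrow> nat \<Rightarrow> nat \<Rightarrow> (pt \<Rightarrow> complex) set" where
  "ringB n k i j = {f \<in> ringA n. \<exists>g\<in>polyfun n. \<exists>h\<in>polyfun n.
     (\<forall>v. generic n v \<or> critical1 n k i j v \<longrightarrow> h v \<noteq> 0) \<and>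
     (\<forall>v. generic n v \<longrightarrow> f v = g v / h v)}"

definition Zvec0 :: "nat \<Rightarrow> zvec set" where
  "Zvec0 n = {z. (\<forall>p. p \<notin> pos n \<longrightarrow> z p = 0) \<and> (\<forall>s. z (n, s) = 0)}"

definition delta :: "nat \<Rightarrow> nat \<Rightarrow> zvec" where
  "delta r s = (\<lambda>p. if p = (r, s) then 1 else 0)"

definition zadd :: "zvec \<Rightarrow> zvec \<Rightarrow> zvec" where
  "zadd z z' = (\<lambda>p. z p + z' p)"

definition zsub :: "zvec \<Rightarrow> zvec \<Rightarrow> zvec" where
  "zsub z z' = (\<lambda>p. z p - z' p)"

definition shift :: "pt \<Rightarrow> zvec \<Rightarrow> pt" where
  "shift v z = (\<lambda>p. v p + of_int (z p))"

definition pplus :: "nat \<Rightarrow> nat \<Rightarrow> pt \<Rightarrow> complex" where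
  "pplus r s v = (\<Prod>t = 1..r + 1. v (r, s) - v (r + 1, t))"

definition pminus :: "nat \<Rightarrow> nat \<Rightarrow> pt \<Rightarrow> complex" where
  "pminus r s v = (\<Prod>t = 1..r - 1. v (r, s) - v (r - 1, t))"

definition qq :: "nat \<Rightarrow> nat \<Rightarrow> pt \<Rightarrow> complex" where
  "qq r s v = (\<Prod>t \<in> {1..r} - {s}. v (r, s) - v (r, t))"

definition rowsum :: "nat \<Rightarrow> pt \<Rightarrow> complex" where
  "rowsum r v = (\<Sum>s = 1..r. v (r, s))"

text \<open>The free A-module V_A with basis T(z), z in Z^N_0: finitely supported coefficient maps.\<close>
definition VA :: "nat \<Rightarrow> vec set" where
  "VA n = {c. finite {z. c z \<noteq> (\<lambda>v. 0)} \<and> (\<forall>z. c z \<in> ringA n) \<and> (\<forall>z. z \<notin> Zvec0 n \<longrightarrow> c z = (\<lambda>v. 0))}"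

definition Eup :: "nat \<Rightarrow> nat \<Rightarrow> vec \<Rightarrow> vec" where
  "Eup n r c = (\<lambda>w v. - (\<Sum>s = 1..r.
      (if generic n v then pplus r s (shift v (zsub w (delta r s))) / qq r s (shift v (zsub w (delta r s))) else 0)
      * c (zsub w (delta r s)) v))"

definition Edown :: "nat \<Rightarrow> nat \<Rightarrow> vec \<Rightarrow> vec" where
  "Edown n r c = (\<lambda>w v. (\<Sum>s = 1..r.
      (if generic n v then pminus r s (shift v (zadd w (delta r s))) / qq r s (shift v (zadd w (delta r s))) else 0)
      * c (zadd w (delta r s)) v))"

definition Ediag :: "nat \<Rightarrow> nat \<Rightarrow> vec \<Rightarrow> vec" where
  "Ediag n r c = (\<lambda>w v. (rowsum r (shift v w) - rowsum (r - 1) (shift v w) + of_nat r - 1) * c w v)"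

definition Tvec :: "nat \<Rightarrow> zvec \<Rightarrow> vec" where
  "Tvec n z = (\<lambda>w v. if w = z \<and> generic n v then 1 else 0)"

definition swapz :: "nat \<Rightarrow> nat \<Rightarrow> nat \<Rightarrow> zvec \<Rightarrow> zvec" where
  "swapz k i j z = z((k, i) := z (k, j), (k, j) := z (k, i))"

definition Svec :: "nat \<Rightarrow> nat \<Rightarrow> nat \<Rightarrow> nat \<Rightarrow> zvec \<Rightarrow> vec" where
  "Svec n k i j z = (\<lambda>w v. (Tvec n z w v + Tvec n (swapz k i j z) w v) / 2)"

definition Avec :: "nat \<Rightarrow> nat \<Rightarrow> nat \<Rightarrow> nat \<Rightarrow> zvec \<Rightarrow> vec" where
  "Avec n k i j z = (\<lambda>w v. if generic n v
      then (Tvec n z w v - Tvec n (swapz k i j z) w v) / (2 * (v (k, i) - v (k, j))) else 0)"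

definition VB :: "nat \<Rightarrow> nat \<Rightarrow> nat \<Rightarrow> nat \<Rightarrow> vec set" where
  "VB n k i j = {u. \<exists>F b c. finite F \<and> F \<subseteq> Zvec0 n \<and>
      (\<forall>z\<in>F. b z \<in> ringB n k i j \<and> c z \<in> ringB n k i j) \<and>
      u = (\<lambda>w v. \<Sum>z\<in>F. b z v * Svec n k i j z w v + c z v * Avec n k i j z w v)}"

end

theory Submission
  imports Defs
begin



lemma polyfun_prod: "finite T \<Longrightarrow> (\<And>t. t \<in> T \<Longrightarrow> f t \<in> polyfun n) \<Longrightarrow> (\<lambda>v. \<Prod>t\<in>T. f t v) \<in> polyfun n"
proof (induction T rule: finite_induct)
  case empty then show ?case by (simp add: polyfun.pconst)
next
  case (insert x F) then show ?case by (simp add: polyfun.pmult)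
qed

lemma polyfun_sum: "finite T \<Longrightarrow> (\<And>t. t \<in> T \<Longrightarrow> f t \<in> polyfun n) \<Longrightarrow> (\<lambda>v. \<Sum>t\<in>T. f t v) \<in> polyfun n"
proof (induction T rule: finite_induct)
  case empty then show ?case by (simp add: polyfun.pconst)
next
  case (insert x F) then show ?case by (simp add: polyfun.padd)
qed

lemma polyfun_diff: "f \<in> polyfun n \<Longrightarrow> g \<in> polyfun n \<Longrightarrow> (\<lambda>v. f v - g v) \<in> polyfun n"
proof -
  assume a: "f \<in> polyfun n" "g \<in> polyfun n"
  have "(\<lambda>v. (-1) * g v) \<in> polyfun n" using a by (intro polyfun.pmult polyfun.pconst)
  then have "(\<lambda>v. f v + (-1) * g v) \<in> polyfun n" using a by (intro polyfun.padd)
  then show ?thesis by simp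
qed

lemma polyfun_shift: "f \<in> polyfun n \<Longrightarrow> (\<lambda>v. f (shift v z)) \<in> polyfun n"
proof (induction rule: polyfun.induct)
  case (pconst c) then show ?case by (simp add: polyfun.pconst)
next
  case (pcoord p) then show ?case by (simp add: shift_def polyfun.padd polyfun.pcoord polyfun.pconst)
next
  case (padd f g) then show ?case by (simp add: polyfun.padd)
next
  case (pmult f g) then show ?case by (simp add: polyfun.pmult)
qed

lemma polyfun_coord_shift: "p \<in> pos n \<Longrightarrow> (\<lambda>v. shift v z p) \<in> polyfun n"
  using polyfun_shift[OF polyfun.pcoord] by auto

locale GT =
  fixes n k i j :: nat
  assumes n2: "n \<ge> 2" and i1: "1 \<le> i" and ij: "i < j" and jk: "j \<le> k" and kn: "k < n"
begin

definition ps :: "nat \<Rightarrow> nat \<Rightarrow> nat" where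
  "ps r t = (if r = k \<and> t = i then j else if r = k \<and> t = j then i else t)"

definition swp :: "nat \<times> nat \<Rightarrow> nat \<times> nat" where
  "swp p = (fst p, ps (fst p) (snd p))"

lemma ps_ps[simp]: "ps r (ps r t) = t"
  unfolding ps_def using ij by auto

lemma swp_swp[simp]: "swp (swp p) = p"
  unfolding swp_def by (cases p) auto

lemma swp_comp_swp[simp]: "f \<circ> swp \<circ> swp = f"
  by (rule ext) simp

lemma swp_pair: "swp (r, t) = (r, ps r t)"
  by (simp add: swp_def)

lemma ps_range: "1 \<le> t \<Longrightarrow> t \<le> r \<Longrightarrow> 1 \<le> ps r t \<and> ps r t \<le> r"
  unfolding ps_def using ij jk i1 by auto

lemma ps_inj: "ps r a = ps r b \<longleftrightarrow> a = b"
  by (metis ps_ps)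

lemma bij_ps: "bij_betw (ps r) {1..r} {1..r}"
proof (rule bij_betw_byWitness[where f'="ps r"])
qed (use ij jk i1 in \<open>auto simp: ps_def\<close>)

lemma bij_ps_minus: "s \<in> {1..r} \<Longrightarrow> bij_betw (ps r) ({1..r} - {s}) ({1..r} - {ps r s})"
proof (rule bij_betw_byWitness[where f'="ps r"])
qed (use ij jk i1 in \<open>auto simp: ps_def\<close>)

lemma swapz_eq: "swapz k i j z = z \<circ> swp"
  unfolding swapz_def swp_def ps_def using ij by (auto simp: fun_eq_iff)

lemma pos_swp: "p \<in> pos n \<Longrightarrow> swp p \<in> pos n"
  unfolding pos_def swp_def ps_def using ij jk i1 by (cases p) auto

lemma shift_swp: "shift v (z \<circ> swp) = shift (v \<circ> swp) z \<circ> swp"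
  by (simp add: shift_def fun_eq_iff)

lemma polyfun_swp: "f \<in> polyfun n \<Longrightarrow> (\<lambda>v. f (v \<circ> swp)) \<in> polyfun n"
proof (induction rule: polyfun.induct)
  case (pconst c) then show ?case by (simp add: polyfun.pconst)
next
  case (pcoord p) then show ?case by (simp add: pos_swp polyfun.pcoord)
next
  case (padd f g) then show ?case by (simp add: polyfun.padd)
next
  case (pmult f g) then show ?case by (simp add: polyfun.pmult)
qed

lemma ki_pos: "(k, i) \<in> pos n" and kj_pos: "(k, j) \<in> pos n"
  using i1 ij jk kn by (auto simp: pos_def)

lemma swp_ki[simp]: "swp (k, i) = (k, j)" and swp_kj[simp]: "swp (k, j) = (k, i)"
  by (auto simp: swp_def ps_def)

lemma divdiff: "f \<in> polyfun n \<Longrightarrow> \<exists>d\<in>polyfun n. \<forall>v. f v - f (v \<circ> swp) = (v (k, i) - v (k, j)) * d v"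
proof (induction rule: polyfun.induct)
  case (pconst c) then show ?case by (intro bexI[of _ "\<lambda>v. 0"]) (auto intro: polyfun.pconst)
next
  case (pcoord p)
  show ?case
  proof (cases "p = (k, i) \<or> p = (k, j)")
    case True
    then show ?thesis
    proof
      assume "p = (k, i)" then show ?thesis by (intro bexI[of _ "\<lambda>v. 1"]) (auto intro: polyfun.pconst)
    next
      assume "p = (k, j)" then show ?thesis by (intro bexI[of _ "\<lambda>v. -1"]) (auto intro: polyfun.pconst)
    qed
  next
    case False
    then have "swp p = p" by (cases p) (auto simp: swp_def ps_def)
    then show ?thesis by (intro bexI[of _ "\<lambda>v. 0"]) (auto intro: polyfun.pconst)
  qed
next
  case (padd f g)
  then obtain d1 d2 where "d1 \<in> polyfun n" "d2 \<in> polyfun n"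
    "\<forall>v. f v - f (v \<circ> swp) = (v (k, i) - v (k, j)) * d1 v"
    "\<forall>v. g v - g (v \<circ> swp) = (v (k, i) - v (k, j)) * d2 v" by blast
  moreover have "\<forall>v. (f v + g v) - (f (v \<circ> swp) + g (v \<circ> swp)) = (v (k, i) - v (k, j)) * (d1 v + d2 v)"
  proof
    fix v
    have "(f v + g v) - (f (v \<circ> swp) + g (v \<circ> swp)) = (f v - f (v \<circ> swp)) + (g v - g (v \<circ> swp))" by simp
    also have "\<dots> = (v (k, i) - v (k, j)) * (d1 v + d2 v)" using calculation by (metis (no_types) \<open>\<forall>v. f v - f (v \<circ> swp) = (v (k, i) - v (k, j)) * d1 v\<close> \<open>\<forall>v. g v - g (v \<circ> swp) = (v (k, i) - v (k, j)) * d2 v\<close> distrib_left)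
    finally show "(f v + g v) - (f (v \<circ> swp) + g (v \<circ> swp)) = (v (k, i) - v (k, j)) * (d1 v + d2 v)" .
  qed
  ultimately show ?case
    by (intro bexI[of _ "\<lambda>v. d1 v + d2 v"]) (blast intro: polyfun.padd)+
next
  case (pmult f g)
  then obtain d1 d2 where d: "d1 \<in> polyfun n" "d2 \<in> polyfun n"
    "\<forall>v. f v - f (v \<circ> swp) = (v (k, i) - v (k, j)) * d1 v"
    "\<forall>v. g v - g (v \<circ> swp) = (v (k, i) - v (k, j)) * d2 v" by blast
  have fs: "(\<lambda>v. f (v \<circ> swp)) \<in> polyfun n" using pmult polyfun_swp by blast
  have "(\<lambda>v. d1 v * g v + f (v \<circ> swp) * d2 v) \<in> polyfun n"
    using d pmult fs by (intro polyfun.padd polyfun.pmult) auto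
  moreover have "\<forall>v. f v * g v - f (v \<circ> swp) * g (v \<circ> swp) = (v (k, i) - v (k, j)) * (d1 v * g v + f (v \<circ> swp) * d2 v)"
  proof
    fix v
    have "f v * g v - f (v \<circ> swp) * g (v \<circ> swp) = (f v - f (v \<circ> swp)) * g v + f (v \<circ> swp) * (g v - g (v \<circ> swp))"
      by (simp add: algebra_simps)
    then show "f v * g v - f (v \<circ> swp) * g (v \<circ> swp) = (v (k, i) - v (k, j)) * (d1 v * g v + f (v \<circ> swp) * d2 v)"
      using d by (simp add: algebra_simps)
  qed
  ultimately show ?case
    by (intro bexI[of _ "\<lambda>v. d1 v * g v + f (v \<circ> swp) * d2 v"]) blast+
qed


end


context GT begin

lemma generic_sym: "generic n v \<longleftrightarrow> (\<forall>r a b. 1 \<le> a \<and> a \<le> r \<and> 1 \<le> b \<and> b \<le> r \<and> a \<noteq> b \<and> r < n \<longrightarrow> v (r, a) - v (r, b) \<notin> \<int>)"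
proof
  assume g: "generic n v"
  show "\<forall>r a b. 1 \<le> a \<and> a \<le> r \<and> 1 \<le> b \<and> b \<le> r \<and> a \<noteq> b \<and> r < n \<longrightarrow> v (r, a) - v (r, b) \<notin> \<int>"
  proof (intro allI impI)
    fix r a b assume h: "1 \<le> a \<and> a \<le> r \<and> 1 \<le> b \<and> b \<le> r \<and> a \<noteq> b \<and> r < n"
    show "v (r, a) - v (r, b) \<notin> \<int>"
    proof (cases "a < b")
      case True then show ?thesis using g h unfolding generic_def by auto
    next
      case False
      then have "v (r, b) - v (r, a) \<notin> \<int>" using g h unfolding generic_def by auto
      then show ?thesis by (metis Ints_minus minus_diff_eq)
    qed
  qed
next
  assume "\<forall>r a b. 1 \<le> a \<and> a \<le> r \<and> 1 \<le> b \<and> b \<le> r \<and> a \<noteq> b \<and> r < n \<longrightarrow> v (r, a) - v (r, b) \<notin> \<int>"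
  then show "generic n v" unfolding generic_def by auto
qed

lemma critical_sym: "critical1 n k i j v \<longleftrightarrow> v (k, i) = v (k, j) \<and>
  (\<forall>r a b. 1 \<le> a \<and> a \<le> r \<and> 1 \<le> b \<and> b \<le> r \<and> a \<noteq> b \<and> r < n \<and> \<not> (r = k \<and> {a, b} = {i, j}) \<longrightarrow> v (r, a) - v (r, b) \<notin> \<int>)"
proof
  assume g: "critical1 n k i j v"
  show "v (k, i) = v (k, j) \<and>
  (\<forall>r a b. 1 \<le> a \<and> a \<le> r \<and> 1 \<le> b \<and> b \<le> r \<and> a \<noteq> b \<and> r < n \<and> \<not> (r = k \<and> {a, b} = {i, j}) \<longrightarrow> v (r, a) - v (r, b) \<notin> \<int>)"
  proof (intro conjI allI impI)
    show "v (k, i) = v (k, j)" using g unfolding critical1_def by auto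
    fix r a b assume h: "1 \<le> a \<and> a \<le> r \<and> 1 \<le> b \<and> b \<le> r \<and> a \<noteq> b \<and> r < n \<and> \<not> (r = k \<and> {a, b} = {i, j})"
    show "v (r, a) - v (r, b) \<notin> \<int>"
    proof (cases "a < b")
      case True
      have "(r, a, b) \<noteq> (k, i, j)" using h by auto
      then show ?thesis using g h True unfolding critical1_def by auto
    next
      case False
      have "(r, b, a) \<noteq> (k, i, j)" using h by auto
      then have "v (r, b) - v (r, a) \<notin> \<int>" using g h False unfolding critical1_def by auto
      then show ?thesis by (metis Ints_minus minus_diff_eq)
    qed
  qed
next
  assume h: "v (k, i) = v (k, j) \<and>
  (\<forall>r a b. 1 \<le> a \<and> a \<le> r \<and> 1 \<le> b \<and> b \<le> r \<and> a \<noteq> b \<and> r < n \<and> \<not> (r = k \<and> {a, b} = {i, j}) \<longrightarrow> v (r, a) - v (r, b) \<notin> \<int>)"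
  show "critical1 n k i j v" unfolding critical1_def
  proof (intro conjI allI impI)
    show "v (k, i) = v (k, j)" using h by auto
    fix r a b assume a: "1 \<le> a \<and> a < b \<and> b \<le> r \<and> r < n \<and> (r, a, b) \<noteq> (k, i, j)"
    then have "\<not> (r = k \<and> {a, b} = {i, j})" using ij by (auto simp: doubleton_eq_iff)
    then show "v (r, a) - v (r, b) \<notin> \<int>" using h a by auto
  qed
qed

lemma genericD: "generic n v \<Longrightarrow> 1 \<le> a \<Longrightarrow> a \<le> r \<Longrightarrow> 1 \<le> b \<Longrightarrow> b \<le> r \<Longrightarrow> a \<noteq> b \<Longrightarrow> r < n \<Longrightarrow> v (r, a) - v (r, b) \<notin> \<int>"
  unfolding generic_sym by blast

lemma criticalD: "critical1 n k i j v \<Longrightarrow> 1 \<le> a \<Longrightarrow> a \<le> r \<Longrightarrow> 1 \<le> b \<Longrightarrow> b \<le> r \<Longrightarrow> a \<noteq> b \<Longrightarrow> r < n \<Longrightarrow> \<not> (r = k \<and> {a, b} = {i, j}) \<Longrightarrow> v (r, a) - v (r, b) \<notin> \<int>"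
  unfolding critical_sym by blast

lemma swp_o_swp[simp]: "swp \<circ> swp = id"
  by (rule ext) simp

lemma comp_swp_apply: "(v \<circ> swp) (r, t) = v (r, ps r t)"
  by (simp add: swp_pair)

lemma generic_swp1: "generic n v \<Longrightarrow> generic n (v \<circ> swp)"
  unfolding generic_sym comp_swp_apply
proof (intro allI impI)
  fix r a b assume g: "\<forall>r a b. 1 \<le> a \<and> a \<le> r \<and> 1 \<le> b \<and> b \<le> r \<and> a \<noteq> b \<and> r < n \<longrightarrow> v (r, a) - v (r, b) \<notin> \<int>"
    and h: "1 \<le> a \<and> a \<le> r \<and> 1 \<le> b \<and> b \<le> r \<and> a \<noteq> b \<and> r < n"
  have "1 \<le> ps r a \<and> ps r a \<le> r \<and> 1 \<le> ps r b \<and> ps r b \<le> r \<and> ps r a \<noteq> ps r b \<and> r < n"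
    using h ps_range ps_inj by auto
  then show "v (r, ps r a) - v (r, ps r b) \<notin> \<int>" using g by blast
qed

lemma generic_swp[simp]: "generic n (v \<circ> swp) \<longleftrightarrow> generic n v"
  using generic_swp1[of v] generic_swp1[of "v \<circ> swp"] by (auto simp: comp_assoc)

lemma critical_swp1:
  assumes c: "critical1 n k i j v" shows "critical1 n k i j (v \<circ> swp)"
proof -
  have e: "v (k, i) = v (k, j)" using c unfolding critical1_def by blast
  have "(v \<circ> swp) (k, i) = (v \<circ> swp) (k, j)" using e by simp
  moreover have "(v \<circ> swp) (r, a) - (v \<circ> swp) (r, b) \<notin> \<int>"
    if h: "1 \<le> a" "a \<le> r" "1 \<le> b" "b \<le> r" "a \<noteq> b" "r < n" "\<not> (r = k \<and> {a, b} = {i, j})" for r a b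
  proof -
    have nq: "\<not> (r = k \<and> {ps r a, ps r b} = {i, j})"
    proof
      assume q: "r = k \<and> {ps r a, ps r b} = {i, j}"
      have X: "{ps r a, ps r b} = {i, j}" and R: "r = k" using q by auto
      have "{a, b} = ps r ` {ps r a, ps r b}" by simp
      also have "\<dots> = ps k ` {i, j}" using X R by metis
      also have "\<dots> = {i, j}" by (auto simp: ps_def)
      finally show False using h q by simp
    qed
    have r1: "1 \<le> ps r a" "ps r a \<le> r" "1 \<le> ps r b" "ps r b \<le> r" using h ps_range by blast+
    have r2: "ps r a \<noteq> ps r b" using h(5) ps_inj by blast
    show ?thesis unfolding comp_swp_apply using criticalD[OF c r1(1,2) r1(3,4) r2 h(6) nq] .
  qed
  ultimately show ?thesis unfolding critical_sym by blast
qed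

lemma critical_swp[simp]: "critical1 n k i j (v \<circ> swp) \<longleftrightarrow> critical1 n k i j v"
  using critical_swp1[of v] critical_swp1[of "v \<circ> swp"] by (auto simp: comp_assoc)

lemma nz_factor:
  assumes "1 \<le> a" "a \<le> r" "1 \<le> b" "b \<le> r" "a \<noteq> b" "r < n"
    and gc: "generic n v \<or> critical1 n k i j v"
    and m: "r = k \<and> {a, b} = {i, j} \<longrightarrow> m \<noteq> 0"
  shows "v (r, a) - v (r, b) + of_int m \<noteq> 0"
proof
  assume z: "v (r, a) - v (r, b) + of_int m = 0"
  then have zi: "v (r, a) - v (r, b) \<in> \<int>"
  proof -
    have "v (r, a) - v (r, b) = - of_int m" using z by (simp add: eq_neg_iff_add_eq_0)
    then show ?thesis by (simp add: Ints_minus)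
  qed
  show False
  proof (cases "generic n v")
    case True then show False using zi genericD[OF True assms(1-6)] by blast
  next
    case False
    then have c: "critical1 n k i j v" using gc by auto
    show False
    proof (cases "r = k \<and> {a, b} = {i, j}")
      case True
      have "(a = i \<and> b = j) \<or> (a = j \<and> b = i)" using True by (simp add: doubleton_eq_iff)
      moreover have "v (k, i) = v (k, j)" using c unfolding critical1_def by blast
      ultimately have "v (r, a) = v (r, b)" using True by auto
      then show False using z m True by simp
    next
      case False then show False using zi criticalD[OF c assms(1-6) False] by blast
    qed
  qed
qed

end


context GT begin

definition Bfun :: "(pt \<Rightarrow> complex) \<Rightarrow> bool" where
  "Bfun f \<longleftrightarrow> (\<exists>g\<in>polyfun n. \<exists>h\<in>polyfun n. (\<forall>v. generic n v \<or> critical1 n k i j v \<longrightarrow> h v \<noteq> 0) \<and>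
      (\<forall>v. generic n v \<longrightarrow> f v = g v / h v))"

lemma BfunI: "g \<in> polyfun n \<Longrightarrow> h \<in> polyfun n \<Longrightarrow> (\<And>v. generic n v \<or> critical1 n k i j v \<Longrightarrow> h v \<noteq> 0) \<Longrightarrow>
   (\<And>v. generic n v \<Longrightarrow> f v = g v / h v) \<Longrightarrow> Bfun f"
  unfolding Bfun_def by blast

lemma BfunE: assumes "Bfun f"
  obtains g h where "g \<in> polyfun n" "h \<in> polyfun n" "\<And>v. generic n v \<or> critical1 n k i j v \<Longrightarrow> h v \<noteq> 0"
   "\<And>v. generic n v \<Longrightarrow> f v = g v / h v"
  using assms unfolding Bfun_def by blast

lemma xy_nz: "generic n v \<Longrightarrow> v (k, i) - v (k, j) \<noteq> 0"
  using genericD[of v i k j] i1 ij jk kn by auto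

lemma Bfun_cong: "Bfun f \<Longrightarrow> (\<And>v. generic n v \<Longrightarrow> f v = f' v) \<Longrightarrow> Bfun f'"
  unfolding Bfun_def by metis

lemma Bfun_poly: "p \<in> polyfun n \<Longrightarrow> Bfun p"
  by (rule BfunI[of p "\<lambda>v. 1"]) (auto intro: polyfun.pconst)

lemma Bfun_const: "Bfun (\<lambda>v. c)"
  by (rule Bfun_poly) (rule polyfun.pconst)

lemma Bfun_add: assumes "Bfun f" "Bfun f'" shows "Bfun (\<lambda>v. f v + f' v)"
proof -
  obtain g h where f: "g \<in> polyfun n" "h \<in> polyfun n" "\<And>v. generic n v \<or> critical1 n k i j v \<Longrightarrow> h v \<noteq> 0"
   "\<And>v. generic n v \<Longrightarrow> f v = g v / h v" using BfunE[OF assms(1)] by blast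
  obtain g' h' where f': "g' \<in> polyfun n" "h' \<in> polyfun n" "\<And>v. generic n v \<or> critical1 n k i j v \<Longrightarrow> h' v \<noteq> 0"
   "\<And>v. generic n v \<Longrightarrow> f' v = g' v / h' v" using BfunE[OF assms(2)] by blast
  show ?thesis
  proof (rule BfunI[of "\<lambda>v. g v * h' v + g' v * h v" "\<lambda>v. h v * h' v"])
    show "(\<lambda>v. g v * h' v + g' v * h v) \<in> polyfun n" using f f' by (intro polyfun.padd polyfun.pmult)
    show "(\<lambda>v. h v * h' v) \<in> polyfun n" using f f' by (intro polyfun.pmult)
    fix v
    show "generic n v \<or> critical1 n k i j v \<Longrightarrow> h v * h' v \<noteq> 0" using f f' by simp
    assume g: "generic n v"
    then have "h v \<noteq> 0" "h' v \<noteq> 0" using f f' by auto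
    then show "f v + f' v = (g v * h' v + g' v * h v) / (h v * h' v)" using f f' g by (simp add: field_simps)
  qed
qed

lemma Bfun_mult: assumes "Bfun f" "Bfun f'" shows "Bfun (\<lambda>v. f v * f' v)"
proof -
  obtain g h where f: "g \<in> polyfun n" "h \<in> polyfun n" "\<And>v. generic n v \<or> critical1 n k i j v \<Longrightarrow> h v \<noteq> 0"
   "\<And>v. generic n v \<Longrightarrow> f v = g v / h v" using BfunE[OF assms(1)] by blast
  obtain g' h' where f': "g' \<in> polyfun n" "h' \<in> polyfun n" "\<And>v. generic n v \<or> critical1 n k i j v \<Longrightarrow> h' v \<noteq> 0"
   "\<And>v. generic n v \<Longrightarrow> f' v = g' v / h' v" using BfunE[OF assms(2)] by blast
  show ?thesis
  proof (rule BfunI[of "\<lambda>v. g v * g' v" "\<lambda>v. h v * h' v"])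
    show "(\<lambda>v. g v * g' v) \<in> polyfun n" using f f' by (intro polyfun.pmult)
    show "(\<lambda>v. h v * h' v) \<in> polyfun n" using f f' by (intro polyfun.pmult)
    fix v
    show "generic n v \<or> critical1 n k i j v \<Longrightarrow> h v * h' v \<noteq> 0" using f f' by simp
    assume g: "generic n v"
    then show "f v * f' v = (g v * g' v) / (h v * h' v)" using f f' g by simp
  qed
qed

lemma Bfun_cmult: "Bfun f \<Longrightarrow> Bfun (\<lambda>v. c * f v)"
  using Bfun_mult[OF Bfun_const] by blast

lemma Bfun_diff: assumes "Bfun f" "Bfun f'" shows "Bfun (\<lambda>v. f v - f' v)"
proof -
  have "Bfun (\<lambda>v. f v + (-1) * f' v)" using assms by (intro Bfun_add Bfun_cmult)
  then show ?thesis by (rule Bfun_cong) simp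
qed

lemma Bfun_sum: "finite T \<Longrightarrow> (\<And>t. t \<in> T \<Longrightarrow> Bfun (f t)) \<Longrightarrow> Bfun (\<lambda>v. \<Sum>t\<in>T. f t v)"
proof (induction T rule: finite_induct)
  case empty then show ?case by (simp add: Bfun_const)
next
  case (insert x F) then show ?case by (simp add: Bfun_add)
qed

lemma Bfun_div: assumes "Bfun f" "p \<in> polyfun n" "\<And>v. generic n v \<or> critical1 n k i j v \<Longrightarrow> p v \<noteq> 0"
  shows "Bfun (\<lambda>v. f v / p v)"
proof -
  obtain g h where f: "g \<in> polyfun n" "h \<in> polyfun n" "\<And>v. generic n v \<or> critical1 n k i j v \<Longrightarrow> h v \<noteq> 0"
   "\<And>v. generic n v \<Longrightarrow> f v = g v / h v" using BfunE[OF assms(1)] by blast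
  show ?thesis
  proof (rule BfunI[of g "\<lambda>v. h v * p v"])
    show "g \<in> polyfun n" by fact
    show "(\<lambda>v. h v * p v) \<in> polyfun n" using f assms by (intro polyfun.pmult)
    fix v
    show "generic n v \<or> critical1 n k i j v \<Longrightarrow> h v * p v \<noteq> 0" using f assms by simp
    assume g: "generic n v"
    then show "f v / p v = g v / (h v * p v)" using f g by simp
  qed
qed

lemma Bfun_swp: assumes "Bfun f" shows "Bfun (\<lambda>v. f (v \<circ> swp))"
proof -
  obtain g h where f: "g \<in> polyfun n" "h \<in> polyfun n" "\<And>v. generic n v \<or> critical1 n k i j v \<Longrightarrow> h v \<noteq> 0"
   "\<And>v. generic n v \<Longrightarrow> f v = g v / h v" using BfunE[OF assms(1)] by blast
  show ?thesis
  proof (rule BfunI[of "\<lambda>v. g (v \<circ> swp)" "\<lambda>v. h (v \<circ> swp)"])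
    show "(\<lambda>v. g (v \<circ> swp)) \<in> polyfun n" using f polyfun_swp by blast
    show "(\<lambda>v. h (v \<circ> swp)) \<in> polyfun n" using f polyfun_swp by blast
    fix v
    show "generic n v \<or> critical1 n k i j v \<Longrightarrow> h (v \<circ> swp) \<noteq> 0" using f(3)[of "v \<circ> swp"] by simp
    assume g: "generic n v"
    then show "f (v \<circ> swp) = g (v \<circ> swp) / h (v \<circ> swp)" using f(4)[of "v \<circ> swp"] by simp
  qed
qed

lemma Bfun_dd: assumes "Bfun f" shows "Bfun (\<lambda>v. (f v - f (v \<circ> swp)) / (v (k, i) - v (k, j)))"
proof -
  obtain g h where f: "g \<in> polyfun n" "h \<in> polyfun n" "\<And>v. generic n v \<or> critical1 n k i j v \<Longrightarrow> h v \<noteq> 0"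
   "\<And>v. generic n v \<Longrightarrow> f v = g v / h v" using BfunE[OF assms(1)] by blast
  define N where "N = (\<lambda>v. g v * h (v \<circ> swp) - g (v \<circ> swp) * h v)"
  have N: "N \<in> polyfun n" unfolding N_def using f polyfun_swp
    by (intro polyfun_diff polyfun.pmult) auto
  obtain d where d: "d \<in> polyfun n" "\<And>v. N v - N (v \<circ> swp) = (v (k, i) - v (k, j)) * d v"
    using divdiff[OF N] by blast
  have Ns: "N (v \<circ> swp) = - N v" for v unfolding N_def by (simp add: comp_assoc)
  show ?thesis
  proof (rule BfunI[of d "\<lambda>v. 2 * h v * h (v \<circ> swp)"])
    show "d \<in> polyfun n" by fact
    show "(\<lambda>v. 2 * h v * h (v \<circ> swp)) \<in> polyfun n" using f polyfun_swp
      by (intro polyfun.pmult polyfun.pconst) auto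
    fix v
    show "generic n v \<or> critical1 n k i j v \<Longrightarrow> 2 * h v * h (v \<circ> swp) \<noteq> 0" using f(3) f(3)[of "v \<circ> swp"] by auto
    assume g: "generic n v"
    have h1: "h v \<noteq> 0" "h (v \<circ> swp) \<noteq> 0" using f(3) f(3)[of "v \<circ> swp"] g by auto
    have xy: "v (k, i) - v (k, j) \<noteq> 0" using xy_nz g by blast
    have "2 * N v = (v (k, i) - v (k, j)) * d v" using d(2)[of v] Ns[of v] by simp
    moreover have "f v - f (v \<circ> swp) = N v / (h v * h (v \<circ> swp))"
      using f(4)[of v] f(4)[of "v \<circ> swp"] g h1 unfolding N_def by (simp add: field_simps)
    ultimately have "f v - f (v \<circ> swp) = ((v (k, i) - v (k, j)) * d v / 2) / (h v * h (v \<circ> swp))"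
      by (metis mult.commute nonzero_mult_div_cancel_left zero_neq_numeral)
    then show "(f v - f (v \<circ> swp)) / (v (k, i) - v (k, j)) = d v / (2 * h v * h (v \<circ> swp))"
      using xy h1 by (simp add: field_simps)
  qed
qed

lemma ringB_iff: "f \<in> ringB n k i j \<longleftrightarrow> (\<forall>v. \<not> generic n v \<longrightarrow> f v = 0) \<and> Bfun f"
  unfolding ringB_def ringA_def Bfun_def by blast

end


context GT begin

definition PP :: "(pt \<Rightarrow> complex) \<Rightarrow> (pt \<Rightarrow> complex) \<Rightarrow> bool" where
  "PP f g \<longleftrightarrow> Bfun (\<lambda>v. f v + g v) \<and> Bfun (\<lambda>v. (v (k, i) - v (k, j)) * (f v - g v))"

lemma Bfun_xy: "Bfun (\<lambda>v. v (k, i) - v (k, j))"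
  by (intro Bfun_poly polyfun_diff polyfun.pcoord ki_pos kj_pos)

lemma PP_cong: "PP f g \<Longrightarrow> (\<And>v. generic n v \<Longrightarrow> f v = f' v) \<Longrightarrow> (\<And>v. generic n v \<Longrightarrow> g v = g' v) \<Longrightarrow> PP f' g'"
  unfolding PP_def
proof (elim conjE, intro conjI)
  assume e: "\<And>v. generic n v \<Longrightarrow> f v = f' v" "\<And>v. generic n v \<Longrightarrow> g v = g' v"
  assume "Bfun (\<lambda>v. f v + g v)" then show "Bfun (\<lambda>v. f' v + g' v)" by (rule Bfun_cong) (simp add: e)
  assume "Bfun (\<lambda>v. (v (k, i) - v (k, j)) * (f v - g v))"
  then show "Bfun (\<lambda>v. (v (k, i) - v (k, j)) * (f' v - g' v))" by (rule Bfun_cong) (simp add: e)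
qed

lemma PP_zero: "PP (\<lambda>v. 0) (\<lambda>v. 0)"
  unfolding PP_def using Bfun_const[of 0] by simp

lemma PP_add: "PP f g \<Longrightarrow> PP f' g' \<Longrightarrow> PP (\<lambda>v. f v + f' v) (\<lambda>v. g v + g' v)"
  unfolding PP_def
proof (elim conjE, intro conjI)
  assume a: "Bfun (\<lambda>v. f v + g v)" "Bfun (\<lambda>v. (v (k, i) - v (k, j)) * (f v - g v))"
    "Bfun (\<lambda>v. f' v + g' v)" "Bfun (\<lambda>v. (v (k, i) - v (k, j)) * (f' v - g' v))"
  show "Bfun (\<lambda>v. f v + f' v + (g v + g' v))"
    using Bfun_add[OF a(1) a(3)] by (rule Bfun_cong) simp
  show "Bfun (\<lambda>v. (v (k, i) - v (k, j)) * (f v + f' v - (g v + g' v)))"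
    using Bfun_add[OF a(2) a(4)] by (rule Bfun_cong) (simp add: algebra_simps)
qed

lemma PP_cmult: "PP f g \<Longrightarrow> PP (\<lambda>v. c * f v) (\<lambda>v. c * g v)"
  unfolding PP_def
proof (elim conjE, intro conjI)
  assume a: "Bfun (\<lambda>v. f v + g v)" "Bfun (\<lambda>v. (v (k, i) - v (k, j)) * (f v - g v))"
  show "Bfun (\<lambda>v. c * f v + c * g v)"
    using Bfun_cmult[OF a(1), of c] by (rule Bfun_cong) (simp add: algebra_simps)
  show "Bfun (\<lambda>v. (v (k, i) - v (k, j)) * (c * f v - c * g v))"
    using Bfun_cmult[OF a(2), of c] by (rule Bfun_cong) (simp add: algebra_simps)
qed

lemma PP_sum: "finite T \<Longrightarrow> (\<And>t. t \<in> T \<Longrightarrow> PP (f t) (g t)) \<Longrightarrow> PP (\<lambda>v. \<Sum>t\<in>T. f t v) (\<lambda>v. \<Sum>t\<in>T. g t v)"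
proof (induction T rule: finite_induct)
  case empty then show ?case by (simp add: PP_zero)
next
  case (insert x F)
  then have "PP (\<lambda>v. f x v + (\<Sum>t\<in>F. f t v)) (\<lambda>v. g x v + (\<Sum>t\<in>F. g t v))"
    by (intro PP_add) auto
  then show ?case using insert by simp
qed

lemma PP_mult:
  assumes p: "PP f g" and a: "Bfun \<alpha>"
  shows "PP (\<lambda>v. \<alpha> v * f v) (\<lambda>v. \<alpha> (v \<circ> swp) * g v)"
proof -
  have S: "Bfun (\<lambda>v. f v + g v)" and D: "Bfun (\<lambda>v. (v (k, i) - v (k, j)) * (f v - g v))"
    using p unfolding PP_def by auto
  have ap: "Bfun (\<lambda>v. \<alpha> v + \<alpha> (v \<circ> swp))" using a Bfun_swp[OF a] by (rule Bfun_add)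
  have am: "Bfun (\<lambda>v. (\<alpha> v - \<alpha> (v \<circ> swp)) / (v (k, i) - v (k, j)))" by (rule Bfun_dd[OF a])
  have 1: "Bfun (\<lambda>v. (1/2) * ((\<alpha> v + \<alpha> (v \<circ> swp)) * (f v + g v) +
      ((\<alpha> v - \<alpha> (v \<circ> swp)) / (v (k, i) - v (k, j))) * ((v (k, i) - v (k, j)) * (f v - g v))))"
    by (intro Bfun_cmult Bfun_add Bfun_mult ap am S D)
  have 2: "Bfun (\<lambda>v. (1/2) * ((v (k, i) - v (k, j)) * (v (k, i) - v (k, j)) *
      ((\<alpha> v - \<alpha> (v \<circ> swp)) / (v (k, i) - v (k, j))) * (f v + g v) +
      (\<alpha> v + \<alpha> (v \<circ> swp)) * ((v (k, i) - v (k, j)) * (f v - g v))))"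
    by (intro Bfun_cmult Bfun_add Bfun_mult ap am S D Bfun_xy)
  show ?thesis unfolding PP_def
  proof
    show "Bfun (\<lambda>v. \<alpha> v * f v + \<alpha> (v \<circ> swp) * g v)"
      using 1
    proof (rule Bfun_cong)
      fix v assume "generic n v"
      then have "v (k, i) - v (k, j) \<noteq> 0" by (rule xy_nz)
      then show "(1/2) * ((\<alpha> v + \<alpha> (v \<circ> swp)) * (f v + g v) +
        ((\<alpha> v - \<alpha> (v \<circ> swp)) / (v (k, i) - v (k, j))) * ((v (k, i) - v (k, j)) * (f v - g v))) =
        \<alpha> v * f v + \<alpha> (v \<circ> swp) * g v"
        by (simp add: field_simps)
    qed
    show "Bfun (\<lambda>v. (v (k, i) - v (k, j)) * (\<alpha> v * f v - \<alpha> (v \<circ> swp) * g v))"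
      using 2
    proof (rule Bfun_cong)
      fix v assume "generic n v"
      then have "v (k, i) - v (k, j) \<noteq> 0" by (rule xy_nz)
      then show "(1/2) * ((v (k, i) - v (k, j)) * (v (k, i) - v (k, j)) *
        ((\<alpha> v - \<alpha> (v \<circ> swp)) / (v (k, i) - v (k, j))) * (f v + g v) +
        (\<alpha> v + \<alpha> (v \<circ> swp)) * ((v (k, i) - v (k, j)) * (f v - g v))) =
        (v (k, i) - v (k, j)) * (\<alpha> v * f v - \<alpha> (v \<circ> swp) * g v)"
        by (simp add: field_simps)
    qed
  qed
qed

lemma PP_sing:
  assumes p: "PP f f" and a: "Bfun (\<lambda>v. (v (k, i) - v (k, j)) * \<alpha> v)"
  shows "PP (\<lambda>v. \<alpha> v * f v) (\<lambda>v. \<alpha> (v \<circ> swp) * f v)"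
proof -
  define \<beta> where "\<beta> = (\<lambda>v. (v (k, i) - v (k, j)) * \<alpha> v)"
  have S: "Bfun (\<lambda>v. f v + f v)" using p unfolding PP_def by auto
  have b: "Bfun \<beta>" using a unfolding \<beta>_def .
  have bp: "Bfun (\<lambda>v. \<beta> v + \<beta> (v \<circ> swp))" using b Bfun_swp[OF b] by (rule Bfun_add)
  have bm: "Bfun (\<lambda>v. (\<beta> v - \<beta> (v \<circ> swp)) / (v (k, i) - v (k, j)))" by (rule Bfun_dd[OF b])
  have bs: "\<beta> (v \<circ> swp) = - (v (k, i) - v (k, j)) * \<alpha> (v \<circ> swp)" for v
    unfolding \<beta>_def by simp
  show ?thesis unfolding PP_def
  proof
    show "Bfun (\<lambda>v. \<alpha> v * f v + \<alpha> (v \<circ> swp) * f v)"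
      using Bfun_mult[OF Bfun_cmult[OF bm, of "1/2"] S]
    proof (rule Bfun_cong)
      fix v assume "generic n v"
      then have "v (k, i) - v (k, j) \<noteq> 0" by (rule xy_nz)
      then show "1/2 * ((\<beta> v - \<beta> (v \<circ> swp)) / (v (k, i) - v (k, j))) * (f v + f v) =
         \<alpha> v * f v + \<alpha> (v \<circ> swp) * f v"
        unfolding bs unfolding \<beta>_def by (simp add: field_simps)
    qed
    show "Bfun (\<lambda>v. (v (k, i) - v (k, j)) * (\<alpha> v * f v - \<alpha> (v \<circ> swp) * f v))"
      using Bfun_mult[OF Bfun_cmult[OF bp, of "1/2"] S]
    proof (rule Bfun_cong)
      fix v assume "generic n v"
      then show "1/2 * (\<beta> v + \<beta> (v \<circ> swp)) * (f v + f v) =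
         (v (k, i) - v (k, j)) * (\<alpha> v * f v - \<alpha> (v \<circ> swp) * f v)"
        unfolding bs unfolding \<beta>_def by (simp add: field_simps)
    qed
  qed
qed

end


context GT begin

lemma coord_diff_poly: "p \<in> pos n \<Longrightarrow> q \<in> pos n \<Longrightarrow> (\<lambda>v. v p - v q) \<in> polyfun n"
  by (intro polyfun_diff polyfun.pcoord)

lemma pplus_poly: "r < n \<Longrightarrow> s \<in> {1..r} \<Longrightarrow> pplus r s \<in> polyfun n"
proof -
  assume a: "r < n" "s \<in> {1..r}"
  have "(\<lambda>v. \<Prod>t = 1..r + 1. v (r, s) - v (r + 1, t)) \<in> polyfun n"
    using a by (intro polyfun_prod coord_diff_poly) (auto simp: pos_def)
  then show ?thesis unfolding pplus_def[abs_def] .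
qed

lemma pminus_poly: "r < n \<Longrightarrow> s \<in> {1..r} \<Longrightarrow> pminus r s \<in> polyfun n"
proof -
  assume a: "r < n" "s \<in> {1..r}"
  have "(\<lambda>v. \<Prod>t = 1..r - 1. v (r, s) - v (r - 1, t)) \<in> polyfun n"
    using a by (intro polyfun_prod coord_diff_poly) (auto simp: pos_def)
  then show ?thesis unfolding pminus_def[abs_def] .
qed

lemma qq_poly: "r < n \<Longrightarrow> s \<in> {1..r} \<Longrightarrow> qq r s \<in> polyfun n"
proof -
  assume a: "r < n" "s \<in> {1..r}"
  have "(\<lambda>v. \<Prod>t \<in> {1..r} - {s}. v (r, s) - v (r, t)) \<in> polyfun n"
    using a by (intro polyfun_prod coord_diff_poly) (auto simp: pos_def)
  then show ?thesis unfolding qq_def[abs_def] .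
qed

lemma rowsum_poly: "r \<le> n \<Longrightarrow> rowsum r \<in> polyfun n"
proof -
  assume a: "r \<le> n"
  have "(\<lambda>v. \<Sum>s = 1..r. v (r, s)) \<in> polyfun n"
    using a by (intro polyfun_sum polyfun.pcoord) (auto simp: pos_def)
  then show ?thesis unfolding rowsum_def[abs_def] .
qed

lemma pplus_swp: "pplus r (ps r s) (u \<circ> swp) = pplus r s u"
proof -
  have "pplus r (ps r s) (u \<circ> swp) = (\<Prod>t = 1..r + 1. u (r, s) - u (r + 1, ps (r + 1) t))"
    unfolding pplus_def by (simp add: swp_pair)
  also have "\<dots> = pplus r s u" unfolding pplus_def
    by (rule prod.reindex_bij_betw[OF bij_ps, where g = "\<lambda>t. u (r, s) - u (r + 1, t)"])
  finally show ?thesis .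
qed

lemma pminus_swp: "pminus r (ps r s) (u \<circ> swp) = pminus r s u"
proof -
  have "pminus r (ps r s) (u \<circ> swp) = (\<Prod>t = 1..r - 1. u (r, s) - u (r - 1, ps (r - 1) t))"
    unfolding pminus_def by (simp add: swp_pair)
  also have "\<dots> = pminus r s u" unfolding pminus_def
    by (rule prod.reindex_bij_betw[OF bij_ps, where g = "\<lambda>t. u (r, s) - u (r - 1, t)"])
  finally show ?thesis .
qed

lemma qq_swp: "s \<in> {1..r} \<Longrightarrow> qq r (ps r s) (u \<circ> swp) = qq r s u"
proof -
  assume s: "s \<in> {1..r}"
  have "qq r (ps r s) (u \<circ> swp) = (\<Prod>t \<in> {1..r} - {ps r s}. u (r, s) - u (r, ps r t))"
    unfolding qq_def by (simp add: swp_pair)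
  also have "\<dots> = (\<Prod>t \<in> {1..r} - {s}. u (r, s) - u (r, ps r (ps r t)))"
    by (rule prod.reindex_bij_betw[OF bij_ps_minus[OF s], where g = "\<lambda>t. u (r, s) - u (r, ps r t)", symmetric])
  also have "\<dots> = qq r s u" unfolding qq_def by simp
  finally show ?thesis .
qed

lemma rowsum_swp: "rowsum r (u \<circ> swp) = rowsum r u"
proof -
  have "rowsum r (u \<circ> swp) = (\<Sum>t = 1..r. u (r, ps r t))"
    unfolding rowsum_def by (simp add: swp_pair)
  also have "\<dots> = rowsum r u" unfolding rowsum_def
    by (rule sum.reindex_bij_betw[OF bij_ps, where g = "\<lambda>t. u (r, t)"])
  finally show ?thesis .
qed

lemma prod_nz: "finite A \<Longrightarrow> (\<And>a. a \<in> A \<Longrightarrow> f a \<noteq> (0::complex)) \<Longrightarrow> prod f A \<noteq> 0"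
  by (simp add: prod_zero_iff)

definition cf :: "(pt \<Rightarrow> complex) \<Rightarrow> nat \<Rightarrow> nat \<Rightarrow> zvec \<Rightarrow> pt \<Rightarrow> complex" where
  "cf A r s z v = (if generic n v then A (shift v z) / qq r s (shift v z) else 0)"

lemma qq_shift: "qq r s (shift v z) = (\<Prod>t \<in> {1..r} - {s}. v (r, s) - v (r, t) + of_int (z (r, s) - z (r, t)))"
  unfolding qq_def shift_def by (intro prod.cong) (auto simp: algebra_simps)

lemma coef_Bfun:
  assumes r: "1 \<le> r" "r < n" "s \<in> {1..r}" and A: "A \<in> polyfun n"
    and ns: "\<not> (r = k \<and> s \<in> {i, j} \<and> z (k, i) = z (k, j))"
  shows "Bfun (cf A r s z)"
proof -
  have "Bfun (\<lambda>v. A (shift v z) / qq r s (shift v z))"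
  proof (rule Bfun_div)
    show "Bfun (\<lambda>v. A (shift v z))" by (rule Bfun_poly, rule polyfun_shift[OF A])
    show "(\<lambda>v. qq r s (shift v z)) \<in> polyfun n" by (rule polyfun_shift[OF qq_poly]) (use r in auto)
    fix v assume gc: "generic n v \<or> critical1 n k i j v"
    have "(\<Prod>t \<in> {1..r} - {s}. v (r, s) - v (r, t) + of_int (z (r, s) - z (r, t))) \<noteq> 0"
    proof (rule prod_nz)
      show "finite ({1..r} - {s})" by simp
      fix t assume t: "t \<in> {1..r} - {s}"
      show "v (r, s) - v (r, t) + of_int (z (r, s) - z (r, t)) \<noteq> 0"
      proof (rule nz_factor)
        show "r = k \<and> {s, t} = {i, j} \<longrightarrow> z (r, s) - z (r, t) \<noteq> 0"
          using ns ij by (auto simp: doubleton_eq_iff)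
      qed (use r t gc in auto)
    qed
    then show "qq r s (shift v z) \<noteq> 0" unfolding qq_shift .
  qed
  then show ?thesis by (rule Bfun_cong) (simp add: cf_def)
qed

lemma qq_split: assumes "s \<in> {i, j}" "s' \<in> {i, j}" "s \<noteq> s'"
  shows "qq k s u = (u (k, s) - u (k, s')) * (\<Prod>t \<in> {1..k} - {i, j}. u (k, s) - u (k, t))"
proof -
  have s': "s' \<in> {1..k}" using assms i1 ij jk by auto
  have "(s = i \<and> s' = j) \<or> (s = j \<and> s' = i)" using assms by auto
  then have e: "{1..k} - {s} = insert s' ({1..k} - {i, j})" using s' ij by auto
  show ?thesis unfolding qq_def e using assms by (subst prod.insert) auto
qed

lemma coef_sing:
  assumes s: "s \<in> {i, j}" and A: "A \<in> polyfun n" and zz: "z (k, i) = z (k, j)"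
  shows "Bfun (\<lambda>v. (v (k, i) - v (k, j)) * cf A k s z v)"
proof -
  define R :: "pt \<Rightarrow> complex" where "R = (\<lambda>v. \<Prod>t \<in> {1..k} - {i, j}. v (k, s) - v (k, t) + of_int (z (k, s) - z (k, t)))"
  have Rnz: "R v \<noteq> 0" if gc: "generic n v \<or> critical1 n k i j v" for v
    unfolding R_def
  proof (rule prod_nz)
    show "finite ({1..k} - {i, j})" by simp
    fix t assume t: "t \<in> {1..k} - {i, j}"
    show "v (k, s) - v (k, t) + of_int (z (k, s) - z (k, t)) \<noteq> 0"
    proof (rule nz_factor)
      show "k = k \<and> {s, t} = {i, j} \<longrightarrow> z (k, s) - z (k, t) \<noteq> 0"
        using t by (auto simp: doubleton_eq_iff)
    qed (use s t gc i1 ij jk kn in auto)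
  qed
  have Rp: "R \<in> polyfun n" unfolding R_def
    by (intro polyfun_prod polyfun.padd polyfun.pconst coord_diff_poly) (use s i1 ij jk kn in \<open>auto simp: pos_def\<close>)
  have B: "Bfun (\<lambda>v. A (shift v z) / R v)"
    by (rule Bfun_div[OF Bfun_poly[OF polyfun_shift[OF A]] Rp Rnz])
  have Rsh: "(\<Prod>t \<in> {1..k} - {i, j}. shift v z (k, s) - shift v z (k, t)) = R v" for v
    unfolding R_def shift_def by (intro prod.cong) (auto simp: algebra_simps)
  show ?thesis
  proof (cases "s = i")
    case True
    have q: "qq k s (shift v z) = (v (k, i) - v (k, j)) * R v" for v
      using qq_split[of s j "shift v z"] True s ij zz Rsh[of v] by (simp add: shift_def)
    show ?thesis using B
    proof (rule Bfun_cong)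
      fix v assume g: "generic n v"
      then show "A (shift v z) / R v = (v (k, i) - v (k, j)) * cf A k s z v"
        using xy_nz[OF g] Rnz[of v] unfolding cf_def q by simp
    qed
  next
    case False
    then have sj: "s = j" using s by auto
    have q: "qq k s (shift v z) = - (v (k, i) - v (k, j)) * R v" for v
      using qq_split[of s i "shift v z"] sj s ij zz Rsh[of v] by (simp add: shift_def)
    show ?thesis using Bfun_cmult[OF B, of "-1"]
    proof (rule Bfun_cong)
      fix v assume g: "generic n v"
      have "v (k, j) - v (k, i) \<noteq> 0" using xy_nz[OF g] by simp
      then show "-1 * (A (shift v z) / R v) = (v (k, i) - v (k, j)) * cf A k s z v"
        using g xy_nz[OF g] Rnz[of v] unfolding cf_def q by (simp add: field_simps)
    qed
  qed
qed

end


context GT begin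

lemma swp_fix: "z (k, i) = z (k, j) \<Longrightarrow> z \<circ> swp = z"
  by (auto simp: fun_eq_iff swp_def ps_def)

lemma PP_coef:
  assumes r: "1 \<le> r" "r < n" "s \<in> {1..r}" and A: "A \<in> polyfun n"
    and p: "PP (u z) (u (z \<circ> swp))"
  shows "PP (\<lambda>v. cf A r s z v * u z v) (\<lambda>v. cf A r s z (v \<circ> swp) * u (z \<circ> swp) v)"
proof (cases "r = k \<and> s \<in> {i, j} \<and> z (k, i) = z (k, j)")
  case True
  then have e: "z \<circ> swp = z" by (intro swp_fix) auto
  have p': "PP (u z) (u z)" using p unfolding e .
  have "Bfun (\<lambda>v. (v (k, i) - v (k, j)) * cf A k s z v)" using True A by (intro coef_sing) auto
  then have "PP (\<lambda>v. cf A k s z v * u z v) (\<lambda>v. cf A k s z (v \<circ> swp) * u z v)"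
    by (rule PP_sing[OF p'])
  then show ?thesis using True e by simp
next
  case False
  then have "Bfun (cf A r s z)" using r A by (intro coef_Bfun) auto
  then show ?thesis by (rule PP_mult[OF p])
qed

lemma cf_swp:
  assumes A: "\<And>u. A' (u \<circ> swp) = A u" and s: "s \<in> {1..r}"
  shows "cf A' r (ps r s) (z \<circ> swp) v = cf A r s z (v \<circ> swp)"
  unfolding cf_def shift_swp A qq_swp[OF s] by simp

lemma zsub_swp: "zsub (w \<circ> swp) (delta r (ps r s)) = zsub w (delta r s) \<circ> swp"
  unfolding zsub_def delta_def by (auto simp: fun_eq_iff swp_def)

lemma zadd_swp: "zadd (w \<circ> swp) (delta r (ps r s)) = zadd w (delta r s) \<circ> swp"
  unfolding zadd_def delta_def by (auto simp: fun_eq_iff swp_def)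

lemma Zvec0_swp: "z \<in> Zvec0 n \<Longrightarrow> z \<circ> swp \<in> Zvec0 n"
  unfolding Zvec0_def
proof (elim CollectE conjE, intro CollectI conjI allI impI)
  assume a: "\<forall>p. p \<notin> pos n \<longrightarrow> z p = 0" "\<forall>s. z (n, s) = 0"
  fix p assume "p \<notin> pos n"
  then have "swp p \<notin> pos n" using pos_swp[of "swp p"] by auto
  then show "(z \<circ> swp) p = 0" using a(1) by (metis comp_def)
next
  fix s
  assume a: "\<forall>p. p \<notin> pos n \<longrightarrow> z p = 0" "\<forall>s. z (n, s) = 0"
  show "(z \<circ> swp) (n, s) = 0" using a by (simp add: swp_pair)
qed

lemma Zvec0_swp_iff: "z \<circ> swp \<in> Zvec0 n \<longleftrightarrow> z \<in> Zvec0 n"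
  using Zvec0_swp[of z] Zvec0_swp[of "z \<circ> swp"] by (auto simp: comp_assoc)

lemma Zvec0_zsub: "1 \<le> r \<Longrightarrow> r < n \<Longrightarrow> s \<in> {1..r} \<Longrightarrow> zsub w (delta r s) \<in> Zvec0 n \<Longrightarrow> w \<in> Zvec0 n"
  unfolding Zvec0_def zsub_def delta_def pos_def by (auto split: if_splits)

lemma Zvec0_zadd: "1 \<le> r \<Longrightarrow> r < n \<Longrightarrow> s \<in> {1..r} \<Longrightarrow> zadd w (delta r s) \<in> Zvec0 n \<Longrightarrow> w \<in> Zvec0 n"
  unfolding Zvec0_def zadd_def delta_def pos_def by (auto split: if_splits) (metis (no_types, lifting) less_imp_le_nat order.trans)+

end


context GT begin

definition VB2 :: "vec set" where
  "VB2 = {u. finite {w. u w \<noteq> (\<lambda>v. 0)} \<and> (\<forall>w. w \<notin> Zvec0 n \<longrightarrow> u w = (\<lambda>v. 0)) \<and>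
     (\<forall>w v. \<not> generic n v \<longrightarrow> u w v = 0) \<and> (\<forall>w. PP (u w) (u (w \<circ> swp)))}"

lemma Eup_cf: "Eup n r u w v = -1 * (\<Sum>s \<in> {1..r}. cf (pplus r s) r s (zsub w (delta r s)) v * u (zsub w (delta r s)) v)"
  unfolding Eup_def cf_def by simp

lemma Edown_cf: "Edown n r u w v = (\<Sum>s \<in> {1..r}. cf (pminus r s) r s (zadd w (delta r s)) v * u (zadd w (delta r s)) v)"
  unfolding Edown_def cf_def by simp

lemma zsub_zadd: "zadd (zsub w d) d = w" "zsub (zadd w d) d = w"
  by (auto simp: zadd_def zsub_def)

lemma Eup_VB2: assumes u: "u \<in> VB2" and r: "1 \<le> r" "r < n" shows "Eup n r u \<in> VB2"
proof -
  have fin: "finite {w. u w \<noteq> (\<lambda>v. 0)}" and Z: "\<And>w. w \<notin> Zvec0 n \<Longrightarrow> u w = (\<lambda>v. 0)"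
    and G: "\<And>w v. \<not> generic n v \<Longrightarrow> u w v = 0" and P: "\<And>w. PP (u w) (u (w \<circ> swp))"
    using u unfolding VB2_def by auto
  have supp: "{w. Eup n r u w \<noteq> (\<lambda>v. 0)} \<subseteq> (\<Union>s\<in>{1..r}. (\<lambda>z. zadd z (delta r s)) ` {w. u w \<noteq> (\<lambda>v. 0)})"
  proof
    fix w assume "w \<in> {w. Eup n r u w \<noteq> (\<lambda>v. 0)}"
    then have ne: "Eup n r u w \<noteq> (\<lambda>v. 0)" by simp
    have "\<exists>s\<in>{1..r}. u (zsub w (delta r s)) \<noteq> (\<lambda>v. 0)"
    proof (rule ccontr)
      assume "\<not> ?thesis"
      then have "Eup n r u w = (\<lambda>v. 0)" by (simp add: fun_eq_iff Eup_cf)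
      then show False using ne by simp
    qed
    then obtain s where "s \<in> {1..r}" "u (zsub w (delta r s)) \<noteq> (\<lambda>v. 0)" by blast
    then show "w \<in> (\<Union>s\<in>{1..r}. (\<lambda>z. zadd z (delta r s)) ` {w. u w \<noteq> (\<lambda>v. 0)})"
      by (auto intro!: bexI[of _ s] image_eqI[of _ _ "zsub w (delta r s)"] simp: zsub_zadd)
  qed
  have 1: "finite {w. Eup n r u w \<noteq> (\<lambda>v. 0)}" by (rule finite_subset[OF supp]) (use fin in auto)
  have 2: "Eup n r u w = (\<lambda>v. 0)" if w: "w \<notin> Zvec0 n" for w
  proof -
    have "u (zsub w (delta r s)) = (\<lambda>v. 0)" if s: "s \<in> {1..r}" for s
      using Z Zvec0_zsub[OF r s] w by blast
    then show ?thesis by (simp add: fun_eq_iff Eup_cf)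
  qed
  have 3: "Eup n r u w v = 0" if "\<not> generic n v" for w v
    using that by (simp add: Eup_cf G)
  have 4: "PP (Eup n r u w) (Eup n r u (w \<circ> swp))" for w
  proof -
    have e1: "Eup n r u w = (\<lambda>v. -1 * (\<Sum>s \<in> {1..r}. cf (pplus r s) r s (zsub w (delta r s)) v * u (zsub w (delta r s)) v))"
      by (simp add: fun_eq_iff Eup_cf)
    have "Eup n r u (w \<circ> swp) v = -1 * (\<Sum>s \<in> {1..r}. cf (pplus r s) r s (zsub w (delta r s)) (v \<circ> swp) * u (zsub w (delta r s) \<circ> swp) v)" for v
    proof -
      have "Eup n r u (w \<circ> swp) v = -1 * (\<Sum>s \<in> {1..r}. cf (pplus r (ps r s)) r (ps r s) (zsub (w \<circ> swp) (delta r (ps r s))) v * u (zsub (w \<circ> swp) (delta r (ps r s))) v)"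
        unfolding Eup_cf
        by (subst sum.reindex_bij_betw[OF bij_ps, symmetric]) simp
      also have "\<dots> = -1 * (\<Sum>s \<in> {1..r}. cf (pplus r s) r s (zsub w (delta r s)) (v \<circ> swp) * u (zsub w (delta r s) \<circ> swp) v)"
        unfolding zsub_swp by (intro arg_cong[where f = "\<lambda>x. -1 * x"] sum.cong refl) (simp add: cf_swp pplus_swp)
      finally show ?thesis .
    qed
    then have e2: "Eup n r u (w \<circ> swp) = (\<lambda>v. -1 * (\<Sum>s \<in> {1..r}. cf (pplus r s) r s (zsub w (delta r s)) (v \<circ> swp) * u (zsub w (delta r s) \<circ> swp) v))"
      by (simp add: fun_eq_iff)
    show ?thesis unfolding e1 e2
      by (intro PP_cmult PP_sum PP_coef r P pplus_poly) auto
  qed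
  show ?thesis unfolding VB2_def using 1 2 3 4 by blast
qed

lemma Edown_VB2: assumes u: "u \<in> VB2" and r: "1 \<le> r" "r < n" shows "Edown n r u \<in> VB2"
proof -
  have fin: "finite {w. u w \<noteq> (\<lambda>v. 0)}" and Z: "\<And>w. w \<notin> Zvec0 n \<Longrightarrow> u w = (\<lambda>v. 0)"
    and G: "\<And>w v. \<not> generic n v \<Longrightarrow> u w v = 0" and P: "\<And>w. PP (u w) (u (w \<circ> swp))"
    using u unfolding VB2_def by auto
  have supp: "{w. Edown n r u w \<noteq> (\<lambda>v. 0)} \<subseteq> (\<Union>s\<in>{1..r}. (\<lambda>z. zsub z (delta r s)) ` {w. u w \<noteq> (\<lambda>v. 0)})"
  proof
    fix w assume "w \<in> {w. Edown n r u w \<noteq> (\<lambda>v. 0)}"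
    then have ne: "Edown n r u w \<noteq> (\<lambda>v. 0)" by simp
    have "\<exists>s\<in>{1..r}. u (zadd w (delta r s)) \<noteq> (\<lambda>v. 0)"
    proof (rule ccontr)
      assume "\<not> ?thesis"
      then have "Edown n r u w = (\<lambda>v. 0)" by (simp add: fun_eq_iff Edown_cf)
      then show False using ne by simp
    qed
    then obtain s where "s \<in> {1..r}" "u (zadd w (delta r s)) \<noteq> (\<lambda>v. 0)" by blast
    then show "w \<in> (\<Union>s\<in>{1..r}. (\<lambda>z. zsub z (delta r s)) ` {w. u w \<noteq> (\<lambda>v. 0)})"
      by (auto intro!: bexI[of _ s] image_eqI[of _ _ "zadd w (delta r s)"] simp: zsub_zadd)
  qed
  have 1: "finite {w. Edown n r u w \<noteq> (\<lambda>v. 0)}" by (rule finite_subset[OF supp]) (use fin in auto)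
  have 2: "Edown n r u w = (\<lambda>v. 0)" if w: "w \<notin> Zvec0 n" for w
  proof -
    have "u (zadd w (delta r s)) = (\<lambda>v. 0)" if s: "s \<in> {1..r}" for s
      using Z Zvec0_zadd[OF r s] w by blast
    then show ?thesis by (simp add: fun_eq_iff Edown_cf)
  qed
  have 3: "Edown n r u w v = 0" if "\<not> generic n v" for w v
    using that by (simp add: Edown_cf G)
  have 4: "PP (Edown n r u w) (Edown n r u (w \<circ> swp))" for w
  proof -
    have e1: "Edown n r u w = (\<lambda>v. (\<Sum>s \<in> {1..r}. cf (pminus r s) r s (zadd w (delta r s)) v * u (zadd w (delta r s)) v))"
      by (simp add: fun_eq_iff Edown_cf)
    have "Edown n r u (w \<circ> swp) v = (\<Sum>s \<in> {1..r}. cf (pminus r s) r s (zadd w (delta r s)) (v \<circ> swp) * u (zadd w (delta r s) \<circ> swp) v)" for v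
    proof -
      have "Edown n r u (w \<circ> swp) v = (\<Sum>s \<in> {1..r}. cf (pminus r (ps r s)) r (ps r s) (zadd (w \<circ> swp) (delta r (ps r s))) v * u (zadd (w \<circ> swp) (delta r (ps r s))) v)"
        unfolding Edown_cf
        by (subst sum.reindex_bij_betw[OF bij_ps, symmetric]) simp
      also have "\<dots> = (\<Sum>s \<in> {1..r}. cf (pminus r s) r s (zadd w (delta r s)) (v \<circ> swp) * u (zadd w (delta r s) \<circ> swp) v)"
        unfolding zadd_swp by (intro sum.cong refl) (simp add: cf_swp pminus_swp)
      finally show ?thesis .
    qed
    then have e2: "Edown n r u (w \<circ> swp) = (\<lambda>v. (\<Sum>s \<in> {1..r}. cf (pminus r s) r s (zadd w (delta r s)) (v \<circ> swp) * u (zadd w (delta r s) \<circ> swp) v))"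
      by (simp add: fun_eq_iff)
    show ?thesis unfolding e1 e2
      by (intro PP_sum PP_coef r P pminus_poly) auto
  qed
  show ?thesis unfolding VB2_def using 1 2 3 4 by blast
qed

lemma Ediag_VB2: assumes u: "u \<in> VB2" and r: "1 \<le> r" "r \<le> n" shows "Ediag n r u \<in> VB2"
proof -
  have fin: "finite {w. u w \<noteq> (\<lambda>v. 0)}" and Z: "\<And>w. w \<notin> Zvec0 n \<Longrightarrow> u w = (\<lambda>v. 0)"
    and G: "\<And>w v. \<not> generic n v \<Longrightarrow> u w v = 0" and P: "\<And>w. PP (u w) (u (w \<circ> swp))"
    using u unfolding VB2_def by auto
  have 1: "finite {w. Ediag n r u w \<noteq> (\<lambda>v. 0)}"
    by (rule finite_subset[OF _ fin]) (auto simp: Ediag_def)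
  have 2: "Ediag n r u w = (\<lambda>v. 0)" if w: "w \<notin> Zvec0 n" for w
    using Z[OF w] by (simp add: Ediag_def fun_eq_iff)
  have 3: "Ediag n r u w v = 0" if "\<not> generic n v" for w v
    using that by (simp add: Ediag_def G)
  have 4: "PP (Ediag n r u w) (Ediag n r u (w \<circ> swp))" for w
  proof -
    define \<alpha> where "\<alpha> = (\<lambda>v. rowsum r (shift v w) - rowsum (r - 1) (shift v w) + of_nat r - 1)"
    have a: "Bfun \<alpha>" unfolding \<alpha>_def
      by (intro Bfun_poly polyfun_diff polyfun.padd polyfun.pconst polyfun_shift rowsum_poly) (use r in auto)
    have e1: "Ediag n r u w = (\<lambda>v. \<alpha> v * u w v)" unfolding \<alpha>_def Ediag_def by simp
    have e2: "Ediag n r u (w \<circ> swp) = (\<lambda>v. \<alpha> (v \<circ> swp) * u (w \<circ> swp) v)"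
      unfolding \<alpha>_def Ediag_def shift_swp rowsum_swp by simp
    show ?thesis unfolding e1 e2 by (rule PP_mult[OF P a])
  qed
  show ?thesis unfolding VB2_def using 1 2 3 4 by blast
qed

end


context GT begin

lemma comp_swp_eq: "(w = z \<circ> swp) \<longleftrightarrow> (z = w \<circ> swp)"
  by (auto simp: comp_assoc)

lemma alg1: "(d::complex) \<noteq> 0 \<Longrightarrow> b * ((1 + 1) / 2) + c * ((1 - 1) / (2 * d)) = b + 0"
  "(d::complex) \<noteq> 0 \<Longrightarrow> b * ((1 + 0) / 2) + c * ((1 - 0) / (2 * d)) = b / 2 + c / (2 * d) + 0"
  "(d::complex) \<noteq> 0 \<Longrightarrow> b * ((0 + 1) / 2) + c * ((0 - 1) / (2 * d)) = 0 + (b / 2 - c / (2 * d))"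
  "(d::complex) \<noteq> 0 \<Longrightarrow> b * ((0 + 0) / 2) + c * ((0 - 0) / (2 * d)) = 0 + 0"
  by (simp_all add: field_simps)

lemma alg3: "(B::complex) + B' = (B/2 + C/(2*d) + (B'/2 - C'/(2*d))) + (B'/2 + C'/(2*d) + (B/2 - C/(2*d)))"
  by (simp add: field_simps)

lemma alg4: "(d::complex) \<noteq> 0 \<Longrightarrow> C - C' = d * ((B/2 + C/(2*d) + (B'/2 - C'/(2*d))) - (B'/2 + C'/(2*d) + (B/2 - C/(2*d))))"
  by (simp add: field_simps)

lemma alg2: "(d::complex) \<noteq> 0 \<Longrightarrow> a = ((a + a') / 2) / 2 + (d * (a - a') / 2) / (2 * d) + (((a' + a) / 2) / 2 - (d * (a' - a) / 2) / (2 * d))"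
  by (simp add: field_simps)

lemma term_eq:
  assumes g: "generic n v"
  shows "b * Svec n k i j z w v + c * Avec n k i j z w v =
    (if z = w then b / 2 + c / (2 * (v (k, i) - v (k, j))) else 0) +
    (if z = w \<circ> swp then b / 2 - c / (2 * (v (k, i) - v (k, j))) else 0)"
proof -
  have d: "v (k, i) - v (k, j) \<noteq> 0" using xy_nz[OF g] .
  show ?thesis
    unfolding Svec_def Avec_def Tvec_def swapz_eq comp_swp_eq using g alg1[OF d, of b c]
    by (cases "z = w"; cases "z = w \<circ> swp") (simp_all add: add_divide_distrib)
qed

lemma sum_formula:
  assumes F: "finite F" and g: "generic n v"
  shows "(\<Sum>z\<in>F. b z v * Svec n k i j z w v + c z v * Avec n k i j z w v) =
    (if w \<in> F then b w v / 2 + c w v / (2 * (v (k, i) - v (k, j))) else 0) +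
    (if w \<circ> swp \<in> F then b (w \<circ> swp) v / 2 - c (w \<circ> swp) v / (2 * (v (k, i) - v (k, j))) else 0)"
  unfolding term_eq[OF g] sum.distrib
  using F by (simp add: sum.delta)

lemma sum_nongen:
  assumes g: "\<not> generic n v"
  shows "(\<Sum>z\<in>F. b z v * Svec n k i j z w v + c z v * Avec n k i j z w v) = 0"
  using g by (simp add: Svec_def Avec_def Tvec_def)

lemma VB_sub_VB2: "VB n k i j \<subseteq> VB2"
proof
  fix u assume "u \<in> VB n k i j"
  then obtain F b c where F: "finite F" "F \<subseteq> Zvec0 n" and bc: "\<forall>z\<in>F. b z \<in> ringB n k i j \<and> c z \<in> ringB n k i j"
    and u: "u = (\<lambda>w v. \<Sum>z\<in>F. b z v * Svec n k i j z w v + c z v * Avec n k i j z w v)"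
    unfolding VB_def by blast
  define b' where "b' z v = (if z \<in> F then b z v else 0)" for z v
  define c' where "c' z v = (if z \<in> F then c z v else 0)" for z v
  have Bb: "Bfun (b' z)" for z
    using bc Bfun_const[of 0] unfolding b'_def ringB_iff by (cases "z \<in> F") auto
  have Bc: "Bfun (c' z)" for z
    using bc Bfun_const[of 0] unfolding c'_def ringB_iff by (cases "z \<in> F") auto
  have ug: "u w v = b' w v / 2 + c' w v / (2 * (v (k, i) - v (k, j))) + (b' (w \<circ> swp) v / 2 - c' (w \<circ> swp) v / (2 * (v (k, i) - v (k, j))))"
    if g: "generic n v" for w v
    unfolding u sum_formula[OF F(1) g] b'_def c'_def by simp
  have un: "u w v = 0" if g: "\<not> generic n v" for w v
    unfolding u using sum_nongen[OF g] by simp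
  have 1: "finite {w. u w \<noteq> (\<lambda>v. 0)}"
  proof (rule finite_subset)
    show "{w. u w \<noteq> (\<lambda>v. 0)} \<subseteq> F \<union> (\<lambda>z. z \<circ> swp) ` F"
    proof
      fix w assume "w \<in> {w. u w \<noteq> (\<lambda>v. 0)}"
      then have ne: "u w \<noteq> (\<lambda>v. 0)" by simp
      show "w \<in> F \<union> (\<lambda>z. z \<circ> swp) ` F"
      proof (rule ccontr)
        assume "w \<notin> F \<union> (\<lambda>z. z \<circ> swp) ` F"
        then have "w \<notin> F" "w \<circ> swp \<notin> F" by (auto simp: image_iff comp_swp_eq)
        have "u w v = 0" for v
        proof (cases "generic n v")
          case True then show ?thesis using ug[OF True, of w] \<open>w \<notin> F\<close> \<open>w \<circ> swp \<notin> F\<close> by (simp add: b'_def c'_def)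
        qed (simp add: un)
        then have "u w = (\<lambda>v. 0)" by (simp add: fun_eq_iff)
        then show False using ne by simp
      qed
    qed
  qed (use F in auto)
  have 2: "u w = (\<lambda>v. 0)" if w: "w \<notin> Zvec0 n" for w
  proof -
    have wF: "w \<notin> F" "w \<circ> swp \<notin> F" using w F(2) Zvec0_swp_iff[of w] by auto
    have "u w v = 0" for v
    proof (cases "generic n v")
      case True then show ?thesis using ug[OF True, of w] wF by (simp add: b'_def c'_def)
    qed (simp add: un)
    then show ?thesis by (simp add: fun_eq_iff)
  qed
  have 4: "PP (u w) (u (w \<circ> swp))" for w
    unfolding PP_def
  proof
    show "Bfun (\<lambda>v. u w v + u (w \<circ> swp) v)"
      using Bfun_add[OF Bb[of w] Bb[of "w \<circ> swp"]]
    proof (rule Bfun_cong)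
      fix v assume g: "generic n v"
      show "b' w v + b' (w \<circ> swp) v = u w v + u (w \<circ> swp) v"
        unfolding ug[OF g, of w] ug[OF g, of "w \<circ> swp"] comp_assoc swp_o_swp comp_id by (rule alg3)
    qed
    show "Bfun (\<lambda>v. (v (k, i) - v (k, j)) * (u w v - u (w \<circ> swp) v))"
      using Bfun_diff[OF Bc[of w] Bc[of "w \<circ> swp"]]
    proof (rule Bfun_cong)
      fix v assume g: "generic n v"
      then have "v (k, i) - v (k, j) \<noteq> 0" by (rule xy_nz)
      then show "c' w v - c' (w \<circ> swp) v = (v (k, i) - v (k, j)) * (u w v - u (w \<circ> swp) v)"
        unfolding ug[OF g, of w] ug[OF g, of "w \<circ> swp"] comp_assoc swp_o_swp comp_id by (rule alg4)
    qed
  qed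
  show "u \<in> VB2" unfolding VB2_def using 1 2 un 4 by blast
qed

lemma VB2_sub_VB: "VB2 \<subseteq> VB n k i j"
proof
  fix u assume u: "u \<in> VB2"
  have fin: "finite {w. u w \<noteq> (\<lambda>v. 0)}" and Z: "\<And>w. w \<notin> Zvec0 n \<Longrightarrow> u w = (\<lambda>v. 0)"
    and G: "\<And>w v. \<not> generic n v \<Longrightarrow> u w v = 0" and P: "\<And>w. PP (u w) (u (w \<circ> swp))"
    using u unfolding VB2_def by auto
  define S where "S = {w. u w \<noteq> (\<lambda>v. 0)}"
  define F where "F = S \<union> (\<lambda>z. z \<circ> swp) ` S"
  have Ffin: "finite F" unfolding F_def S_def using fin by auto
  have SZ: "S \<subseteq> Zvec0 n" unfolding S_def using Z by blast
  have FZ: "F \<subseteq> Zvec0 n" unfolding F_def using SZ Zvec0_swp by auto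
  have Fswp: "w \<circ> swp \<in> F \<longleftrightarrow> w \<in> F" for w
    unfolding F_def by (auto simp: image_iff comp_swp_eq)
  define b where "b z v = (u z v + u (z \<circ> swp) v) / 2" for z v
  define c where "c z v = (v (k, i) - v (k, j)) * (u z v - u (z \<circ> swp) v) / 2" for z v
  have bB: "b z \<in> ringB n k i j" for z
    unfolding ringB_iff
  proof
    show "\<forall>v. \<not> generic n v \<longrightarrow> b z v = 0" by (simp add: b_def G)
    show "Bfun (b z)" using Bfun_cmult[of _ "1/2", OF conjunct1[OF P[of z, unfolded PP_def]]]
      by (rule Bfun_cong) (simp add: b_def)
  qed
  have cB: "c z \<in> ringB n k i j" for z
    unfolding ringB_iff
  proof
    show "\<forall>v. \<not> generic n v \<longrightarrow> c z v = 0" by (simp add: c_def G)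
    show "Bfun (c z)" using Bfun_cmult[of _ "1/2", OF conjunct2[OF P[of z, unfolded PP_def]]]
      by (rule Bfun_cong) (simp add: c_def)
  qed
  have ueq: "u = (\<lambda>w v. \<Sum>z\<in>F. b z v * Svec n k i j z w v + c z v * Avec n k i j z w v)"
  proof (intro ext)
    fix w v
    show "u w v = (\<Sum>z\<in>F. b z v * Svec n k i j z w v + c z v * Avec n k i j z w v)"
    proof (cases "generic n v")
      case False then show ?thesis using sum_nongen[OF False] G[OF False] by simp
    next
      case g: True
      have d: "v (k, i) - v (k, j) \<noteq> 0" using xy_nz[OF g] .
      show ?thesis
      proof (cases "w \<in> F")
        case True
        then have T2: "w \<circ> swp \<in> F" using Fswp by simp
        have e: "w \<circ> swp \<circ> swp = w" by (simp add: comp_assoc)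
        show ?thesis
          apply (subst sum_formula[OF Ffin g])
          unfolding if_P[OF True] if_P[OF T2] b_def c_def e
          by (rule alg2[OF d])
      next
        case False
        then have "w \<circ> swp \<notin> F" using Fswp by simp
        moreover have "w \<notin> S" using False unfolding F_def by auto
        then have "u w v = 0" unfolding S_def by (metis (mono_tags) mem_Collect_eq)
        ultimately show ?thesis unfolding sum_formula[OF Ffin g] using False by simp
      qed
    qed
  qed
  show "u \<in> VB n k i j" unfolding VB_def
    apply (rule CollectI, rule exI[of _ F], rule exI[of _ b], rule exI[of _ c])
    using Ffin FZ bB cB ueq by blast
qed

end


context GT begin

lemma VB2_sub_VA: "VB2 \<subseteq> VA n"
proof
  fix u assume u: "u \<in> VB2"
  have fin: "finite {w. u w \<noteq> (\<lambda>v. 0)}" and Z: "\<And>w. w \<notin> Zvec0 n \<Longrightarrow> u w = (\<lambda>v. 0)"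
    and G: "\<And>w v. \<not> generic n v \<Longrightarrow> u w v = 0" and P: "\<And>w. PP (u w) (u (w \<circ> swp))"
    using u unfolding VB2_def by auto
  have "u w \<in> ringA n" for w
  proof -
    obtain g1 h1 where f1: "g1 \<in> polyfun n" "h1 \<in> polyfun n" "\<And>v. generic n v \<or> critical1 n k i j v \<Longrightarrow> h1 v \<noteq> 0"
      "\<And>v. generic n v \<Longrightarrow> u w v + u (w \<circ> swp) v = g1 v / h1 v"
      using BfunE[OF conjunct1[OF P[of w, unfolded PP_def]]] by blast
    obtain g2 h2 where f2: "g2 \<in> polyfun n" "h2 \<in> polyfun n" "\<And>v. generic n v \<or> critical1 n k i j v \<Longrightarrow> h2 v \<noteq> 0"
      "\<And>v. generic n v \<Longrightarrow> (v (k, i) - v (k, j)) * (u w v - u (w \<circ> swp) v) = g2 v / h2 v"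
      using BfunE[OF conjunct2[OF P[of w, unfolded PP_def]]] by blast
    define D where "D = (\<lambda>v::pt. v (k, i) - v (k, j))"
    have Dp: "D \<in> polyfun n" unfolding D_def by (intro coord_diff_poly ki_pos kj_pos)
    have "(\<lambda>v. g1 v * h2 v * D v + g2 v * h1 v) \<in> polyfun n" using f1 f2 Dp
      by (intro polyfun.padd polyfun.pmult)
    moreover have "(\<lambda>v. 2 * h1 v * h2 v * D v) \<in> polyfun n" using f1 f2 Dp
      by (intro polyfun.pmult polyfun.pconst)
    moreover have "\<forall>v. generic n v \<longrightarrow> 2 * h1 v * h2 v * D v \<noteq> 0 \<and>
        u w v = (g1 v * h2 v * D v + g2 v * h1 v) / (2 * h1 v * h2 v * D v)"
    proof (intro allI impI conjI)
      fix v assume g: "generic n v"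
      have nz: "h1 v \<noteq> 0" "h2 v \<noteq> 0" "D v \<noteq> 0" using f1(3) f2(3) g xy_nz[OF g] unfolding D_def by auto
      then show "2 * h1 v * h2 v * D v \<noteq> 0" by simp
      have e1: "u w v + u (w \<circ> swp) v = g1 v / h1 v" using f1(4) g by blast
      have e2: "D v * (u w v - u (w \<circ> swp) v) = g2 v / h2 v" using f2(4) g unfolding D_def by blast
      have "u w v = ((u w v + u (w \<circ> swp) v) + (D v * (u w v - u (w \<circ> swp) v)) / D v) / 2"
        using nz by (simp add: field_simps)
      also have "\<dots> = (g1 v / h1 v + (g2 v / h2 v) / D v) / 2" unfolding e1 e2 ..
      also have "\<dots> = (g1 v * h2 v * D v + g2 v * h1 v) / (2 * h1 v * h2 v * D v)"
        using nz by (simp add: field_simps)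
      finally show "u w v = (g1 v * h2 v * D v + g2 v * h1 v) / (2 * h1 v * h2 v * D v)" .
    qed
    ultimately show ?thesis unfolding ringA_def
      by (intro CollectI conjI bexI[of _ "\<lambda>v. g1 v * h2 v * D v + g2 v * h1 v"] bexI[of _ "\<lambda>v. 2 * h1 v * h2 v * D v"])
        (use G in auto)
  qed
  then show "u \<in> VA n" unfolding VA_def using fin Z by blast
qed

end


theorem mainTheorem3:
  fixes n k i j :: nat
  assumes "n \<ge> 2" and "1 \<le> i" and "i < j" and "j \<le> k" and "k < n"
  shows "VB n k i j \<subseteq> VA n \<and>
    (\<forall>u\<in>VB n k i j.
       (\<forall>r. 1 \<le> r \<and> r < n \<longrightarrow> Eup n r u \<in> VB n k i j \<and> Edown n r u \<in> VB n k i j) \<and>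
       (\<forall>r. 1 \<le> r \<and> r \<le> n \<longrightarrow> Ediag n r u \<in> VB n k i j))"
proof -
  interpret GT n k i j using assms by unfold_locales
  have 1: "VB n k i j \<subseteq> VA n" using VB_sub_VB2 VB2_sub_VA by blast
  have 2: "Eup n r u \<in> VB n k i j \<and> Edown n r u \<in> VB n k i j"
    if "u \<in> VB n k i j" "1 \<le> r" "r < n" for u r
    using Eup_VB2[of u r] Edown_VB2[of u r] VB_sub_VB2 VB2_sub_VB that by blast
  have 3: "Ediag n r u \<in> VB n k i j"
    if "u \<in> VB n k i j" "1 \<le> r" "r \<le> n" for u r
    using Ediag_VB2[of u r] VB_sub_VB2 VB2_sub_VB that by blast
  show ?thesis using 1 2 3 by blast
qed

end
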